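(* Let $1\leq n\leq N$ and let $\boldsymbol{\epsilon}_N$ be the indicator vector of a rejective sampling design of size $n$ with canonical parameters $\mathbf{p}_N=(p_1,\ldots,p_N)$ and first-order inclusion probabilities $\pi_1,\ldots,\pi_N$, with $d_N=\sum_{i=1}^Np_i(1-p_i)\geq1$, and $\kappa_N=(n/N)/\min_{i\leq N}\pi_i$. Let $\mathcal{G}$ be any class of classifiers and $(X_i,Y_i)_{i\leq N}$ any data in $\mathcal{X}\times\{-1,+1\}$. Then $$\sup_{g\in\mathcal{G}}\big|\widetilde{L}_{\boldsymbol{\epsilon}_N}(g)-\bar{L}_{\boldsymbol{\epsilon}_N}(g)\big|\leq\frac1N\sum_{i=1}^N\left|\frac1{p_i}-\frac1{\pi_i}\right|\leq\frac{6N\kappa_N}{n\,d_N}.$$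
   Context: A rejective design of size $n$ with canonical parameters $\mathbf{p}_N\in(0,1)^N$, $\sum_ip_i=n$, draws $S\subseteq\{1,\ldots,N\}$ with $\mathbb{P}(S=s)=C\prod_{i\in s}p_i\prod_{i\notin s}(1-p_i)$ if $\#s=n$ and $0$ otherwise; $\epsilon_i=\mathbb{I}\{i\in S\}$, $\pi_i=\mathbb{P}(i\in S)$. The HT empirical risk is $\bar{L}_{\boldsymbol{\epsilon}_N}(g)=\frac1N\sum_{i=1}^N\frac{\epsilon_i}{\pi_i}\mathbb{I}\{g(X_i)\neq Y_i\}$ and the biased HT risk is $\widetilde{L}_{\boldsymbol{\epsilon}_N}(g)=\frac1N\sum_{i=1}^N\frac{\epsilon_i}{p_i}\mathbb{I}\{g(X_i)\neq Y_i\}$. *)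

theory Defs
  imports Main "HOL-Analysis.Analysis"
begin

definition samples :: "nat \<Rightarrow> nat \<Rightarrow> nat set set" where
  "samples N n = {s. s \<subseteq> {1..N} \<and> card s = n}"

definition rej_weight :: "nat \<Rightarrow> (nat \<Rightarrow> real) \<Rightarrow> nat set \<Rightarrow> real" where
  "rej_weight N p s = (\<Prod>i\<in>s. p i) * (\<Prod>i\<in>{1..N} - s. 1 - p i)"

definition rej_prob :: "nat \<Rightarrow> nat \<Rightarrow> (nat \<Rightarrow> real) \<Rightarrow> nat set \<Rightarrow> real" where
  "rej_prob N n p s =
     (if s \<in> samples N n
      then rej_weight N p s / (\<Sum>t\<in>samples N n. rej_weight N p t)
      else 0)"

definition incl_prob :: "nat \<Rightarrow> nat \<Rightarrow> (nat \<Rightarrow> real) \<Rightarrow> nat \<Rightarrow> real" where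
  "incl_prob N n p i = (\<Sum>s\<in>{s\<in>samples N n. i \<in> s}. rej_prob N n p s)"

definition d_N :: "nat \<Rightarrow> (nat \<Rightarrow> real) \<Rightarrow> real" where
  "d_N N p = (\<Sum>i=1..N. p i * (1 - p i))"

definition kappa_N :: "nat \<Rightarrow> nat \<Rightarrow> (nat \<Rightarrow> real) \<Rightarrow> real" where
  "kappa_N N n p = (real n / real N) / Min (incl_prob N n p ` {1..N})"

definition ht_risk :: "nat \<Rightarrow> nat set \<Rightarrow> (nat \<Rightarrow> real) \<Rightarrow> ('x \<Rightarrow> int) \<Rightarrow> (nat \<Rightarrow> 'x) \<Rightarrow> (nat \<Rightarrow> int) \<Rightarrow> real" where
  "ht_risk N S w g X Y =
     (1 / real N) * (\<Sum>i=1..N. (if i \<in> S then 1 else 0) / w i * (if g (X i) \<noteq> Y i then 1 else 0))"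

definition HT_risk :: "nat \<Rightarrow> nat \<Rightarrow> (nat \<Rightarrow> real) \<Rightarrow> nat set \<Rightarrow> ('x \<Rightarrow> int) \<Rightarrow> (nat \<Rightarrow> 'x) \<Rightarrow> (nat \<Rightarrow> int) \<Rightarrow> real" where
  "HT_risk N n p S g X Y = ht_risk N S (incl_prob N n p) g X Y"

definition biased_HT_risk :: "nat \<Rightarrow> nat set \<Rightarrow> (nat \<Rightarrow> real) \<Rightarrow> ('x \<Rightarrow> int) \<Rightarrow> (nat \<Rightarrow> 'x) \<Rightarrow> (nat \<Rightarrow> int) \<Rightarrow> real" where
  "biased_HT_risk N S p g X Y = ht_risk N S p g X Y"

end

theory Submission
  imports Defs
begin


definition Fq :: "(nat \<Rightarrow> real) \<Rightarrow> nat set \<Rightarrow> nat \<Rightarrow> real" where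
  "Fq q A k = (\<Sum>s\<in>{s. s \<subseteq> A \<and> Suc (card s) = k}. \<Prod>i\<in>s. q i)"

lemma Fq_0[simp]: "Fq q A 0 = 0"
  unfolding Fq_def by simp

lemma Fq_empty: "Fq q {} k = (if k = 1 then 1 else 0)"
proof -
  have e: "{s. s \<subseteq> {} \<and> Suc (card s) = k} = (if k = 1 then {{}} else {})" by auto
  show ?thesis unfolding Fq_def e by (cases "k = 1") simp_all
qed

lemma Fq_insert:
  assumes "finite B" "a \<notin> B"
  shows "Fq q (insert a B) (Suc k) = Fq q B (Suc k) + q a * Fq q B k"
proof -
  let ?S1 = "{s. s \<subseteq> B \<and> Suc (card s) = Suc k}"
  let ?S2 = "{s. s \<subseteq> B \<and> Suc (card s) = k}"
  have eq: "{s. s \<subseteq> insert a B \<and> Suc (card s) = Suc k} = ?S1 \<union> insert a ` ?S2"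
  proof (rule set_eqI, rule iffI)
    fix s assume s: "s \<in> {s. s \<subseteq> insert a B \<and> Suc (card s) = Suc k}"
    then have fs: "finite s" using assms(1) finite_subset by auto
    show "s \<in> ?S1 \<union> insert a ` ?S2"
    proof (cases "a \<in> s")
      case True
      then have "s = insert a (s - {a})" by auto
      moreover have "s - {a} \<subseteq> B" using s by auto
      moreover have "Suc (card (s - {a})) = k" using s True fs card_Suc_Diff1[OF fs True]
        by simp
      ultimately show ?thesis by blast
    next
      case False
      then show ?thesis using s by auto
    qed
  next
    fix s assume "s \<in> ?S1 \<union> insert a ` ?S2"
    then show "s \<in> {s. s \<subseteq> insert a B \<and> Suc (card s) = Suc k}"
    proof
      assume "s \<in> ?S1" then show ?thesis by auto
    next
      assume "s \<in> insert a ` ?S2"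
      then obtain t where t: "t \<subseteq> B" "Suc (card t) = k" "s = insert a t" by auto
      have "finite t" using t(1) assms(1) finite_subset by auto
      moreover have "a \<notin> t" using t(1) assms(2) by auto
      ultimately show ?thesis using t by auto
    qed
  qed
  have fin1: "finite ?S1"
    by (rule finite_subset[of _ "Pow B"]) (auto simp: assms(1))
  have fin2: "finite ?S2"
    by (rule finite_subset[of _ "Pow B"]) (auto simp: assms(1))
  have disj: "?S1 \<inter> insert a ` ?S2 = {}" using assms(2) by auto
  have inj: "inj_on (insert a) ?S2"
    unfolding inj_on_def using assms(2) by (metis (no_types, lifting) insert_ident mem_Collect_eq subset_iff)
  have "(\<Sum>s\<in>insert a ` ?S2. \<Prod>i\<in>s. q i) = (\<Sum>t\<in>?S2. \<Prod>i\<in>insert a t. q i)"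
    by (rule sum.reindex[OF inj, unfolded comp_def])
  also have "\<dots> = (\<Sum>t\<in>?S2. q a * (\<Prod>i\<in>t. q i))"
  proof (rule sum.cong[OF refl])
    fix t assume "t \<in> ?S2"
    then have "finite t" "a \<notin> t" using assms finite_subset by auto
    then show "(\<Prod>i\<in>insert a t. q i) = q a * (\<Prod>i\<in>t. q i)" by simp
  qed
  also have "\<dots> = q a * Fq q B k" unfolding Fq_def by (simp add: sum_distrib_left)
  finally have h2: "(\<Sum>s\<in>insert a ` ?S2. \<Prod>i\<in>s. q i) = q a * Fq q B k" .
  show ?thesis
    unfolding Fq_def[of q "insert a B"] eq
    by (subst sum.union_disjoint) (use fin1 fin2 disj h2 in \<open>auto simp: Fq_def\<close>)
qed

lemma Fq_nonneg: "(\<And>i. i \<in> A \<Longrightarrow> 0 \<le> q i) \<Longrightarrow> 0 \<le> Fq q A k"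
  unfolding Fq_def by (intro sum_nonneg prod_nonneg) auto

lemma Fq_zero:
  assumes "finite A" "card A + 1 < k"
  shows "Fq q A k = 0"
proof -
  { fix s assume s: "s \<subseteq> A" "Suc (card s) = k"
    then have "card s \<le> card A" using card_mono assms(1) by blast
    then have False using assms(2) s(2) by simp }
  then have e: "{s. s \<subseteq> A \<and> Suc (card s) = k} = {}" by blast
  show ?thesis unfolding Fq_def e by simp
qed

lemma Fq_pos:
  assumes "finite A" "\<And>i. i \<in> A \<Longrightarrow> 0 < q i" "1 \<le> k" "k \<le> card A + 1"
  shows "0 < Fq q A k"
proof -
  have "k - 1 \<le> card A" using assms(4) by simp
  then obtain s where s: "s \<subseteq> A" "card s = k - 1"
    by (meson obtain_subset_with_card_n)
  have fin: "finite {s. s \<subseteq> A \<and> Suc (card s) = k}"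
    by (rule finite_subset[of _ "Pow A"]) (auto simp: assms(1))
  have mem: "s \<in> {s. s \<subseteq> A \<and> Suc (card s) = k}" using s assms(3) by auto
  have "0 < (\<Prod>i\<in>s. q i)" using s(1) assms(2) by (intro prod_pos) auto
  moreover have "\<forall>t\<in>{s. s \<subseteq> A \<and> Suc (card s) = k}. 0 \<le> (\<Prod>i\<in>t. q i)"
    using assms(2) by (auto intro!: prod_nonneg) (meson less_imp_le subsetD)
  ultimately show ?thesis unfolding Fq_def
    using sum_pos2[OF fin mem] by auto
qed

lemma Fq_remove:
  assumes "finite A" "j \<in> A"
  shows "Fq q A (Suc k) = Fq q (A - {j}) (Suc k) + q j * Fq q (A - {j}) k"
proof -
  have "A = insert j (A - {j})" using assms by auto
  then have "Fq q A (Suc k) = Fq q (insert j (A - {j})) (Suc k)" by simp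
  also have "\<dots> = Fq q (A - {j}) (Suc k) + q j * Fq q (A - {j}) k"
    by (rule Fq_insert) (use assms in auto)
  finally show ?thesis .
qed

lemma mid_ineq:
  fixes x y z w :: real
  assumes "0 \<le> x" "0 \<le> y" "0 \<le> z" "0 \<le> w"
    "x * z \<le> y^2" "y * w \<le> z^2" "y = 0 \<Longrightarrow> z = 0" "z = 0 \<Longrightarrow> w = 0"
  shows "x * w \<le> y * z"
proof (cases "y = 0 \<or> z = 0")
  case True
  then show ?thesis using assms by auto
next
  case False
  then have yz: "0 < y * z" using assms by auto
  have "(x * z) * (y * w) \<le> y^2 * z^2"
    using assms by (intro mult_mono) auto
  then have "(x * w) * (y * z) \<le> (y * z) * (y * z)"
    by (simp add: power2_eq_square algebra_simps)
  then show ?thesis using yz by (simp add: mult_le_cancel_right_pos)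
qed

lemma Fq_LC:
  fixes q :: "nat \<Rightarrow> real" and k :: nat
  assumes "finite A" "\<And>i. i \<in> A \<Longrightarrow> 0 < q i"
  shows "Fq q A k * Fq q A (k + 2) \<le> (Fq q A (k + 1))^2"
  using assms
proof (induction A arbitrary: k rule: finite_induct)
  case empty
  then show ?case by (simp add: Fq_empty)
next
  case (insert a B)
  have qa: "0 < q a" using insert by auto
  have qB: "\<And>i. i \<in> B \<Longrightarrow> 0 < q i" using insert by auto
  have IH: "\<And>k. Fq q B k * Fq q B (k + 2) \<le> (Fq q B (k + 1))^2"
    using insert.IH qB by blast
  have nn: "\<And>k. 0 \<le> Fq q B k" using qB by (intro Fq_nonneg) (auto intro: less_imp_le)
  have Z: "\<And>k. 0 < k \<Longrightarrow> Fq q B k = 0 \<Longrightarrow> Fq q B (Suc k) = 0"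
  proof -
    fix kk :: nat assume kk: "0 < kk" "Fq q B kk = 0"
    have "\<not> kk \<le> card B + 1" using Fq_pos[of B q kk] insert.hyps(1) qB kk by auto
    then show "Fq q B (Suc kk) = 0" by (intro Fq_zero) (use insert.hyps(1) in auto)
  qed
  show ?case
  proof (cases k)
    case 0
    then show ?thesis by simp
  next
    case (Suc m)
    define g0 where "g0 = Fq q B m"
    define g1 where "g1 = Fq q B (m+1)"
    define g2 where "g2 = Fq q B (m+2)"
    define g3 where "g3 = Fq q B (m+3)"
    have e1: "Fq q (insert a B) k = g1 + q a * g0"
      unfolding g1_def g0_def Suc using Fq_insert[OF insert.hyps, of q m] by simp
    have e2: "Fq q (insert a B) (k+1) = g2 + q a * g1"
      unfolding g1_def g2_def Suc using Fq_insert[OF insert.hyps, of q "m+1"] by simp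
    have e3: "Fq q (insert a B) (k+2) = g3 + q a * g2"
      unfolding g3_def g2_def Suc using Fq_insert[OF insert.hyps, of q "m+2"] by (simp add: numeral_3_eq_3)
    have h1: "g0 * g2 \<le> g1^2" unfolding g0_def g1_def g2_def using IH[of m] by (simp add: add.commute)
    have h2: "g1 * g3 \<le> g2^2" unfolding g3_def g1_def g2_def using IH[of "m+1"]
      by (simp add: add.commute numeral_3_eq_3)
    have h3: "g0 * g3 \<le> g1 * g2"
      apply (rule mid_ineq)
      using nn h1 h2 Z[of "m+1"] Z[of "m+2"] unfolding g0_def g1_def g2_def g3_def
      by (auto simp: numeral_3_eq_3)
    have "(g1 + q a * g0) * (g3 + q a * g2) \<le> (g2 + q a * g1)^2"
    proof -
      have "(g2 + q a * g1)^2 - (g1 + q a * g0) * (g3 + q a * g2)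
          = (g2^2 - g1 * g3) + q a * (g1 * g2 - g0 * g3) + (q a)^2 * (g1^2 - g0 * g2)"
        by (simp add: power2_eq_square algebra_simps)
      also have "\<dots> \<ge> 0" using h1 h2 h3 qa by (intro add_nonneg_nonneg mult_nonneg_nonneg) auto
      finally show ?thesis by simp
    qed
    then show ?thesis using e1 e2 e3 by simp
  qed
qed

lemma Fq_sum:
  assumes "finite A"
  shows "(\<Sum>j\<in>A. q j * Fq q (A - {j}) k) = real k * Fq q A (Suc k)"
  using assms
proof (induction A arbitrary: k rule: finite_induct)
  case empty
  then show ?case by (simp add: Fq_empty)
next
  case (insert a B)
  show ?case
  proof (cases k)
    case 0
    then show ?thesis by simp
  next
    case (Suc m)
    have "(\<Sum>j\<in>insert a B. q j * Fq q (insert a B - {j}) k)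
        = q a * Fq q B k + (\<Sum>j\<in>B. q j * Fq q (insert a B - {j}) k)"
      using insert.hyps by (simp add: insert_Diff_if)
    also have "(\<Sum>j\<in>B. q j * Fq q (insert a B - {j}) k)
        = (\<Sum>j\<in>B. q j * Fq q (B - {j}) k + q a * (q j * Fq q (B - {j}) m))"
    proof (rule sum.cong[OF refl])
      fix j assume j: "j \<in> B"
      then have "insert a B - {j} = insert a (B - {j})" using insert.hyps by auto
      then have "Fq q (insert a B - {j}) k = Fq q (B - {j}) k + q a * Fq q (B - {j}) m"
        unfolding Suc using Fq_insert[of "B - {j}" a q m] insert.hyps by auto
      then show "q j * Fq q (insert a B - {j}) k = q j * Fq q (B - {j}) k + q a * (q j * Fq q (B - {j}) m)"
        by (simp add: algebra_simps)
    qed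
    also have "\<dots> = real k * Fq q B (Suc k) + q a * (real m * Fq q B (Suc m))"
      using insert.IH by (simp add: sum.distrib sum_distrib_left[symmetric])
    finally show ?thesis
      using Fq_insert[OF insert.hyps, of q "Suc m"] unfolding Suc
      by (simp add: algebra_simps)
  qed
qed



lemma frac_cross:
  fixes a b c e :: real
  assumes "0 < b" "0 < e" "a * e \<le> c * b"
  shows "a / b \<le> c / e"
proof -
  have "a / b = (a * e)/(b * e)" "c / e = (c * b)/(b * e)" using assms by auto
  moreover have "(a * e)/(b * e) \<le> (c * b)/(b * e)" using assms by (intro divide_right_mono) auto
  ultimately show ?thesis by simp
qed

lemma tilt_low:
  fixes u q :: real assumes "0 < u" "0 < q"
  shows "(1 - 1/u) * (q/(1+q) * (1 - q/(1+q))) \<le> q/(1+q) - q/(u+q)"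
proof -
  have nz: "u+q \<noteq> 0" "1+q \<noteq> 0" "u \<noteq> 0" using assms by auto
  have e1: "q/(1+q) - q/(u+q) = q *(u-1)/((1+q) *(u+q))"
    using assms nz by (simp add: field_simps)
  have e2: "(1 - 1/u) * (q/(1+q) * (1 - q/(1+q))) = (u-1) * q/(u *(1+q)^2)"
    using assms nz by (simp add: field_simps power2_eq_square)
  have "(u-1) * q/(u *(1+q)^2) \<le> q *(u-1)/((1+q) *(u+q))"
  proof (rule frac_cross)
    show "0 < u *(1+q)^2" "0 < (1+q) *(u+q)" using assms by auto
    have "q *(u-1) *(u *(1+q)^2) - (u-1) * q *((1+q) *(u+q)) = q *(1+q) * q *(u-1)^2"
      by (simp add: power2_eq_square algebra_simps)
    also have "\<dots> \<ge> 0" using assms by simp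
    finally show "(u-1) * q *((1+q) *(u+q)) \<le> q *(u-1) *(u *(1+q)^2)" by simp
  qed
  then show ?thesis using e1 e2 by simp
qed

lemma tilt_high:
  fixes v q :: real assumes "0 < v" "0 < q"
  shows "(1 - 1/v) * (q/(1+q) * (1 - q/(1+q))) \<le> q * v/(1+q * v) - q/(1+q)"
proof -
  have "0 < q * v" using assms by simp
  then have "0 < 1 + q * v" by linarith
  then have nz: "1+q * v \<noteq> 0" "1+q \<noteq> 0" "v \<noteq> 0" using assms by auto
  have e1: "q * v/(1+q * v) - q/(1+q) = q *(v-1)/((1+q) *(1+q * v))"
    using assms nz by (simp add: field_simps)
  have e2: "(1 - 1/v) * (q/(1+q) * (1 - q/(1+q))) = (v-1) * q/(v *(1+q)^2)"
    using assms nz by (simp add: field_simps power2_eq_square)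
  have "(v-1) * q/(v *(1+q)^2) \<le> q *(v-1)/((1+q) *(1+q * v))"
  proof (rule frac_cross)
    show "0 < v *(1+q)^2" "0 < (1+q) *(1+q * v)" using assms \<open>0 < 1 + q * v\<close> by auto
    have "q *(v-1) *(v *(1+q)^2) - (v-1) * q *((1+q) *(1+q * v)) = q *(1+q) *(v-1)^2"
      by (simp add: power2_eq_square algebra_simps)
    also have "\<dots> \<ge> 0" using assms by simp
    finally show "(v-1) * q *((1+q) *(1+q * v)) \<le> q *(v-1) *(v *(1+q)^2)" by simp
  qed
  then show ?thesis using e1 e2 by simp
qed

lemma ratio_bound:
  fixes q u v d pi :: real
  assumes q: "0 < q" and u: "0 < u" and v: "0 < v" and d: "1 \<le> d"
    and hu: "(1 - 1/u) * d \<le> 1" and hv: "(1 - 1/v) * d \<le> 1"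
    and lo: "q/(u+q) \<le> pi" and hi: "pi \<le> q * v/(1+q * v)" and two: "pi \<le> 2 * (q/(1+q))"
  shows "\<bar>pi / (q/(1+q)) - 1\<bar> \<le> 6 / d"
proof -
  define r where "r = pi / (q/(1+q))"
  have pp: "0 < q/(1+q)" using q by simp
  have "0 < q * v" using q v by simp
  then have "0 < 1 + q * v" by linarith
  then have nz: "u+q \<noteq> 0" "1+q \<noteq> 0" "u \<noteq> 0" "1+q * v \<noteq> 0" "v \<noteq> 0" "q \<noteq> 0"
    using q u v by auto
  have rlo: "(1+q)/(u+q) \<le> r"
  proof -
    have "(1+q)/(u+q) = (q/(u+q)) / (q/(1+q))" using q u by (simp add: divide_simps)
    moreover have "(q/(u+q)) / (q/(1+q)) \<le> pi / (q/(1+q))"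
      using lo pp by (intro divide_right_mono) auto
    ultimately show ?thesis unfolding r_def by simp
  qed
  have rhi: "r \<le> v *(1+q)/(1+q * v)"
  proof -
    have "v *(1+q)/(1+q * v) = (q * v/(1+q * v)) / (q/(1+q))" using q v by (simp add: divide_simps)
    moreover have "pi / (q/(1+q)) \<le> (q * v/(1+q * v)) / (q/(1+q))"
      using hi pp by (intro divide_right_mono) auto
    ultimately show ?thesis unfolding r_def by simp
  qed
  have r2: "r \<le> 2" unfolding r_def using two pp by (simp only: divide_le_eq) simp
  have dpos: "0 < d" using d by simp
  have A: "1 - r \<le> 6/d"
  proof (cases "u \<le> 1")
    case True
    then have "1 \<le> (1+q)/(u+q)" using q u by simp
    then have "1 - r \<le> 0" using rlo by simp
    also have "0 \<le> 6/d" using dpos by simp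
    finally show ?thesis .
  next
    case False
    have "1 - r \<le> 1 - (1+q)/(u+q)" using rlo by simp
    also have "\<dots> = (u-1)/(u+q)" using q u nz by (simp add: field_simps)
    also have "\<dots> \<le> (u-1)/u" using False q u by (intro divide_left_mono) auto
    also have "\<dots> = 1 - 1/u" using u by (simp add: field_simps)
    also have "\<dots> \<le> 1/d" using hu dpos by (simp add: le_divide_eq)
    also have "\<dots> \<le> 6/d" using dpos by (simp add: divide_right_mono)
    finally show ?thesis .
  qed
  have B: "r - 1 \<le> 6/d"
  proof (cases "d \<le> 6")
    case True
    have "r - 1 \<le> 1" using r2 by simp
    also have "1 \<le> 6/d" using True dpos by (simp add: le_divide_eq)
    finally show ?thesis .
  next
    case False
    have rv: "r \<le> max 1 v"
    proof (cases "v \<le> 1")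
      case True
      have "v *(1+q)/(1+q * v) \<le> 1" using True q v \<open>0 < 1 + q * v\<close> by (simp add: divide_le_eq algebra_simps)
      then show ?thesis using rhi by simp
    next
      case False
      have "v *(1+q)/(1+q * v) \<le> v" using False q v \<open>0 < 1 + q * v\<close> by (simp add: divide_le_eq algebra_simps)
      then show ?thesis using rhi by simp
    qed
    have "d - d/v \<le> 1" using hv by (simp add: algebra_simps)
    then have "d * v - d \<le> v" using v by (simp add: field_simps)
    then have "v *(d-1) \<le> d" by (simp add: algebra_simps)
    then have "v \<le> d/(d-1)" using False by (simp add: le_divide_eq mult.commute)
    then have "v - 1 \<le> 1/(d-1)" using False by (simp add: field_simps)
    also have "1/(d-1) \<le> 6/d" using False by (simp add: field_simps)
    finally have "v - 1 \<le> 6/d" .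
    moreover have "0 \<le> 6/d" using dpos by simp
    moreover have "max 1 v = 1 \<or> max 1 v = v" by (simp add: max_def)
    ultimately show ?thesis using rv by linarith
  qed
  show ?thesis using A B unfolding r_def[symmetric] by linarith
qed



lemma loc_ineqs:
  fixes q G0 G1 G2 G3 a b c :: real
  assumes q: "0 < q" and nn: "0 \<le> G0" "0 \<le> G1" "0 \<le> G2" "0 \<le> G3"
    and ea: "a = G1 + q * G0" and eb: "b = G2 + q * G1" and ec: "c = G3 + q * G2"
    and pos: "0 < a" "0 < b" "0 < c"
    and lc0: "G0 * G2 \<le> G1^2" and lc1: "G1 * G3 \<le> G2^2"
  shows "q/(b/a + q) \<le> q * G1/b"
    and "q * G1/b \<le> q *(b/c)/(1 + q *(b/c))"
    and "q * G0/a \<le> q/(b/a + q)"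
    and "q *(b/c)/(1 + q *(b/c)) \<le> q * G2/c"
    and "a \<le> b \<Longrightarrow> q * G1/b \<le> 2 *(q/(1+q))"
proof -
  have P1: "G2 * a \<le> G1 * b"
  proof -
    have "G1 * b - G2 * a = q * (G1^2 - G0 * G2)" unfolding ea eb by (simp add: power2_eq_square algebra_simps)
    also have "\<dots> \<ge> 0" using q lc0 by simp
    finally show ?thesis by simp
  qed
  have P2: "G1 * c \<le> G2 * b"
  proof -
    have "G2 * b - G1 * c = G2^2 - G1 * G3" unfolding ec eb by (simp add: power2_eq_square algebra_simps)
    also have "\<dots> \<ge> 0" using lc1 by simp
    finally show ?thesis by simp
  qed
  have P3: "G0 * b \<le> G1 * a"
  proof -
    have "G1 * a - G0 * b = G1^2 - G0 * G2" unfolding ea eb by (simp add: power2_eq_square algebra_simps)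
    also have "\<dots> \<ge> 0" using lc0 by simp
    finally show ?thesis by simp
  qed
  have e1: "q/(b/a + q) = q * a/(b + q * a)" using pos q by (simp add: divide_simps)
  have e2: "q *(b/c)/(1 + q *(b/c)) = q * b/(c + q * b)" using pos q by (simp add: divide_simps)
  have qa: "0 < q * a" "0 < q * b" using q pos by auto
  show "q/(b/a + q) \<le> q * G1/b"
    unfolding e1
  proof (rule frac_cross)
    show "0 < b + q * a" "0 < b" using pos qa by auto
    have "q * G1 *(b + q * a) - q * a * b = q *(G1 * b - G2 * a)" unfolding eb by (simp add: algebra_simps)
    also have "\<dots> \<ge> 0" using q P1 by simp
    finally show "q * a * b \<le> q * G1 *(b + q * a)" by simp
  qed
  show "q * G1/b \<le> q *(b/c)/(1 + q *(b/c))"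
    unfolding e2
  proof (rule frac_cross)
    show "0 < b" "0 < c + q * b" using pos qa by auto
    have "q * b * b - q * G1 *(c + q * b) = q *(G2 * b - G1 * c)" unfolding eb by (simp add: algebra_simps)
    also have "\<dots> \<ge> 0" using q P2 by simp
    finally show "q * G1 *(c + q * b) \<le> q * b * b" by simp
  qed
  show "q * G0/a \<le> q/(b/a + q)"
    unfolding e1
  proof (rule frac_cross)
    show "0 < a" "0 < b + q * a" using pos qa by auto
    have "q * a * a - q * G0 *(b + q * a) = q *(G1 * a - G0 * b)" unfolding ea by (simp add: algebra_simps)
    also have "\<dots> \<ge> 0" using q P3 by simp
    finally show "q * G0 *(b + q * a) \<le> q * a * a" by simp
  qed
  show "q *(b/c)/(1 + q *(b/c)) \<le> q * G2/c"
    unfolding e2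
  proof (rule frac_cross)
    show "0 < c + q * b" "0 < c" using pos qa by auto
    have "q * G2 *(c + q * b) - q * b * c = q * q *(G2 * b - G1 * c)" unfolding ec eb by (simp add: algebra_simps)
    also have "\<dots> \<ge> 0" using q P2 by simp
    finally show "q * b * c \<le> q * G2 *(c + q * b)" by simp
  qed
  assume ab: "a \<le> b"
  show "q * G1/b \<le> 2 *(q/(1+q))"
  proof -
    have "2 *(q/(1+q)) = (2 * q)/(1+q)" by simp
    moreover have "q * G1/b \<le> (2 * q)/(1+q)"
    proof (rule frac_cross)
      show "0 < b" "0 < 1+q" using pos q by auto
      have "(1+q) * G1 \<le> 2 * b"
      proof (cases "1 \<le> q")
        case True
        have "(1+q) * G1 \<le> (q+q) * G1" using True nn by (intro mult_right_mono) auto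
        also have "\<dots> \<le> 2 * b" unfolding eb using nn by simp
        finally show ?thesis .
      next
        case False
        have "(1+q) * G1 \<le> 2 * G1" using False nn by (intro mult_right_mono) auto
        also have "G1 \<le> a" unfolding ea using q nn by simp
        then have "2 * G1 \<le> 2 * b" using ab by simp
        finally show ?thesis .
      qed
      then have "q *((1+q) * G1) \<le> q *(2 * b)" using q by (intro mult_left_mono) auto
      then show "q * G1 *(1+q) \<le> 2 * q * b" by (simp add: algebra_simps)
    qed
    ultimately show ?thesis by simp
  qed
qed



lemma core:
  fixes q :: "nat \<Rightarrow> real" and A :: "nat set" and m :: nat
  assumes fin: "finite A" and qpos: "\<And>i. i \<in> A \<Longrightarrow> 0 < q i" and card: "m + 2 \<le> card A"
    and psum: "(\<Sum>j\<in>A. q j/(1+q j)) = real (Suc m)"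
    and d1: "1 \<le> (\<Sum>j\<in>A. q j/(1+q j) * (1 - q j/(1+q j)))"
  shows "\<forall>j\<in>A. 0 < q j * Fq q (A-{j}) (Suc m) / Fq q A (Suc (Suc m)) \<and>
     \<bar>(q j * Fq q (A-{j}) (Suc m) / Fq q A (Suc (Suc m))) / (q j/(1+q j)) - 1\<bar>
       \<le> 6 / (\<Sum>j\<in>A. q j/(1+q j) * (1 - q j/(1+q j)))"
proof -
  define a where "a = Fq q A (Suc m)"
  define b where "b = Fq q A (Suc (Suc m))"
  define c where "c = Fq q A (Suc (Suc (Suc m)))"
  define d where "d = (\<Sum>j\<in>A. q j/(1+q j) * (1 - q j/(1+q j)))"
  define G where "G = (\<lambda>j k. Fq q (A - {j}) k)"
  define pi where "pi = (\<lambda>j. q j * G j (Suc m) / b)"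
  define u where "u = b / a"
  define v where "v = b / c"
  have apos: "0 < a" unfolding a_def using card by (intro Fq_pos fin qpos) auto
  have bpos: "0 < b" unfolding b_def using card by (intro Fq_pos fin qpos) auto
  have cpos: "0 < c" unfolding c_def using card by (intro Fq_pos fin qpos) auto
  have upos: "0 < u" unfolding u_def using apos bpos by simp
  have vpos: "0 < v" unfolding v_def using cpos bpos by simp
  have Gnn: "\<And>j k. j \<in> A \<Longrightarrow> 0 \<le> G j k" unfolding G_def
    by (intro Fq_nonneg) (auto intro: less_imp_le qpos)
  have Gpos: "\<And>j. j \<in> A \<Longrightarrow> 0 < G j (Suc m)"
  proof -
    fix j assume j: "j \<in> A"
    have "card (A - {j}) = card A - 1" using j fin by simp
    then show "0 < G j (Suc m)" unfolding G_def using card fin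
      by (intro Fq_pos) (auto intro: qpos)
  qed
  have pipos: "\<And>j. j \<in> A \<Longrightarrow> 0 < pi j" unfolding pi_def using Gpos qpos bpos by simp
  have loc: "\<And>j. j \<in> A \<Longrightarrow>
      q j/(b/a + q j) \<le> q j * G j (Suc m)/b \<and>
      q j * G j (Suc m)/b \<le> q j *(b/c)/(1 + q j *(b/c)) \<and>
      q j * G j m/a \<le> q j/(b/a + q j) \<and>
      q j *(b/c)/(1 + q j *(b/c)) \<le> q j * G j (Suc (Suc m))/c \<and>
      (a \<le> b \<longrightarrow> q j * G j (Suc m)/b \<le> 2 *(q j/(1+q j)))"
  proof -
    fix j assume j: "j \<in> A"
    have ea: "a = G j (Suc m) + q j * G j m" unfolding a_def G_def by (rule Fq_remove[OF fin j])
    have eb: "b = G j (Suc (Suc m)) + q j * G j (Suc m)" unfolding b_def G_def by (rule Fq_remove[OF fin j])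
    have ec: "c = G j (Suc (Suc (Suc m))) + q j * G j (Suc (Suc m))" unfolding c_def G_def by (rule Fq_remove[OF fin j])
    have finj: "finite (A - {j})" using fin by simp
    have qj: "\<And>i. i \<in> A - {j} \<Longrightarrow> 0 < q i" using qpos by auto
    have lc0: "G j m * G j (Suc (Suc m)) \<le> (G j (Suc m))^2"
      unfolding G_def using Fq_LC[where A="A-{j}" and q=q and k=m] finj qj by simp
    have lc1: "G j (Suc m) * G j (Suc (Suc (Suc m))) \<le> (G j (Suc (Suc m)))^2"
      unfolding G_def using Fq_LC[where A="A-{j}" and q=q and k="Suc m"] finj qj by (simp add: numeral_2_eq_2)
    note L = loc_ineqs[OF qpos[OF j] Gnn[OF j] Gnn[OF j] Gnn[OF j] Gnn[OF j] ea eb ec apos bpos cpos lc0 lc1]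
    show "?thesis j" using L by blast
  qed
  have sumS: "(\<Sum>j\<in>A. q j * G j (Suc m)) = real (Suc m) * b"
    unfolding G_def b_def by (rule Fq_sum[OF fin])
  have sum0: "(\<Sum>j\<in>A. q j * G j m) = real m * a"
    unfolding G_def a_def by (rule Fq_sum[OF fin])
  have sum2: "(\<Sum>j\<in>A. q j * G j (Suc (Suc m))) = real (Suc (Suc m)) * c"
    unfolding G_def c_def by (rule Fq_sum[OF fin])
  have sumpi: "(\<Sum>j\<in>A. pi j) = real (Suc m)"
    unfolding pi_def using sumS bpos by (simp add: sum_divide_distrib[symmetric])
  have Ane: "A \<noteq> {}" using card by auto
  have ab: "a \<le> b"
  proof (rule ccontr)
    assume "\<not> a \<le> b"
    then have "u < 1" unfolding u_def using apos by simp
    have "(\<Sum>j\<in>A. q j/(1+q j)) < (\<Sum>j\<in>A. pi j)"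
    proof (rule sum_strict_mono[OF fin Ane])
      fix j assume j: "j \<in> A"
      have "q j/(1+q j) < q j/(u + q j)"
        using \<open>u < 1\<close> upos qpos[OF j] by (intro divide_strict_left_mono) auto
      also have "\<dots> \<le> pi j" using loc[OF j] unfolding pi_def u_def by simp
      finally show "q j/(1+q j) < pi j" .
    qed
    then show False using psum sumpi by simp
  qed
  have hu: "(1 - 1/u) * d \<le> 1"
  proof -
    have "(1 - 1/u) * d = (\<Sum>j\<in>A. (1 - 1/u) * (q j/(1+q j) * (1 - q j/(1+q j))))"
      unfolding d_def by (simp add: sum_distrib_left)
    also have "\<dots> \<le> (\<Sum>j\<in>A. q j/(1+q j) - q j/(u + q j))"
      by (intro sum_mono tilt_low upos qpos)
    also have "\<dots> = real (Suc m) - (\<Sum>j\<in>A. q j/(u + q j))"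
      using psum by (simp add: sum_subtractf)
    finally have 1: "(1 - 1/u) * d \<le> real (Suc m) - (\<Sum>j\<in>A. q j/(u + q j))" .
    have 2: "(\<Sum>j\<in>A. q j/(u + q j)) \<ge> (\<Sum>j\<in>A. q j * G j m / a)"
      using loc unfolding u_def by (intro sum_mono) auto
    have 3: "(\<Sum>j\<in>A. q j * G j m / a) = real m"
      using sum0 apos by (simp add: sum_divide_distrib[symmetric])
    show ?thesis using 1 2 3 by simp
  qed
  have hv: "(1 - 1/v) * d \<le> 1"
  proof -
    have "(1 - 1/v) * d = (\<Sum>j\<in>A. (1 - 1/v) * (q j/(1+q j) * (1 - q j/(1+q j))))"
      unfolding d_def by (simp add: sum_distrib_left)
    also have "\<dots> \<le> (\<Sum>j\<in>A. q j * v/(1 + q j * v) - q j/(1+q j))"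
      by (intro sum_mono tilt_high vpos qpos)
    also have "\<dots> = (\<Sum>j\<in>A. q j * v/(1 + q j * v)) - real (Suc m)"
      using psum by (simp add: sum_subtractf)
    finally have 1: "(1 - 1/v) * d \<le> (\<Sum>j\<in>A. q j * v/(1 + q j * v)) - real (Suc m)" .
    have 2: "(\<Sum>j\<in>A. q j * v/(1 + q j * v)) \<le> (\<Sum>j\<in>A. q j * G j (Suc (Suc m)) / c)"
      using loc unfolding v_def by (intro sum_mono) (auto simp: mult.commute)
    have 3: "(\<Sum>j\<in>A. q j * G j (Suc (Suc m)) / c) = real (Suc (Suc m))"
      using sum2 cpos by (simp add: sum_divide_distrib[symmetric])
    show ?thesis using 1 2 3 by simp
  qed
  show ?thesis
  proof
    fix j assume j: "j \<in> A"
    have "\<bar>pi j / (q j/(1+q j)) - 1\<bar> \<le> 6 / d"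
    proof (rule ratio_bound[OF qpos[OF j] upos vpos _ hu hv])
      show "1 \<le> d" using d1 unfolding d_def .
      show "q j / (u + q j) \<le> pi j" using loc[OF j] unfolding pi_def u_def by simp
      show "pi j \<le> q j * v / (1 + q j * v)" using loc[OF j] unfolding pi_def v_def by simp
      show "pi j \<le> 2 * (q j / (1 + q j))" using loc[OF j] ab unfolding pi_def by simp
    qed
    then show "0 < q j * Fq q (A-{j}) (Suc m) / Fq q A (Suc (Suc m)) \<and>
     \<bar>(q j * Fq q (A-{j}) (Suc m) / Fq q A (Suc (Suc m))) / (q j/(1+q j)) - 1\<bar>
       \<le> 6 / (\<Sum>j\<in>A. q j/(1+q j) * (1 - q j/(1+q j)))"
      using pipos[OF j] unfolding pi_def G_def b_def d_def by simp
  qed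
qed



lemma samples_eq: "samples N n = {s. s \<subseteq> {1..N} \<and> Suc (card s) = Suc n}"
  unfolding samples_def by simp

lemma incl_prob_eq:
  fixes N n :: nat and p :: "nat \<Rightarrow> real"
  assumes p: "\<forall>i\<in>{1..N}. 0 < p i \<and> p i < 1" and j: "j \<in> {1..N}"
  defines "q \<equiv> (\<lambda>i. p i / (1 - p i))"
  shows "incl_prob N n p j = q j * Fq q ({1..N} - {j}) n / Fq q {1..N} (Suc n)"
proof -
  define A where "A = {1..N::nat}"
  define C where "C = (\<Prod>i\<in>A. 1 - p i)"
  have fin: "finite A" unfolding A_def by simp
  have Cpos: "0 < C" unfolding C_def A_def using p by (intro prod_pos) auto
  have rw: "\<And>s. s \<subseteq> A \<Longrightarrow> rej_weight N p s = C * (\<Prod>i\<in>s. q i)"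
  proof -
    fix s assume s: "s \<subseteq> A"
    have "(\<Prod>i\<in>s. p i) = (\<Prod>i\<in>s. q i * (1 - p i))"
    proof (rule prod.cong[OF refl])
      fix i assume "i \<in> s"
      then have "p i < 1" using s p unfolding A_def by auto
      then show "p i = q i * (1 - p i)" unfolding q_def by simp
    qed
    also have "\<dots> = (\<Prod>i\<in>s. q i) * (\<Prod>i\<in>s. 1 - p i)" by (rule prod.distrib)
    finally have 1: "(\<Prod>i\<in>s. p i) = (\<Prod>i\<in>s. q i) * (\<Prod>i\<in>s. 1 - p i)" .
    have 2: "C = (\<Prod>i\<in>A - s. 1 - p i) * (\<Prod>i\<in>s. 1 - p i)"
      unfolding C_def using prod.subset_diff[OF s fin] by simp
    show "rej_weight N p s = C * (\<Prod>i\<in>s. q i)"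
      unfolding rej_weight_def A_def[symmetric] 1 2 by (simp add: algebra_simps)
  qed
  have Z: "(\<Sum>t\<in>samples N n. rej_weight N p t) = C * Fq q A (Suc n)"
  proof -
    have "(\<Sum>t\<in>samples N n. rej_weight N p t) = (\<Sum>t\<in>samples N n. C * (\<Prod>i\<in>t. q i))"
      by (intro sum.cong refl rw) (auto simp: samples_def A_def)
    also have "\<dots> = C * Fq q A (Suc n)"
      unfolding Fq_def samples_eq A_def by (simp add: sum_distrib_left)
    finally show ?thesis .
  qed
  have finS: "finite (samples N n)" unfolding samples_def
    by (rule finite_subset[of _ "Pow {1..N}"]) auto
  have split: "(\<Sum>s\<in>samples N n. \<Prod>i\<in>s. q i)
      = (\<Sum>s\<in>{s\<in>samples N n. j \<in> s}. \<Prod>i\<in>s. q i) + (\<Sum>s\<in>{s\<in>samples N n. j \<notin> s}. \<Prod>i\<in>s. q i)"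
  proof -
    have "samples N n = {s\<in>samples N n. j \<in> s} \<union> {s\<in>samples N n. j \<notin> s}" by auto
    moreover have "{s\<in>samples N n. j \<in> s} \<inter> {s\<in>samples N n. j \<notin> s} = {}" by auto
    ultimately show ?thesis using finS
      by (metis (no_types, lifting) finite_Un sum.union_disjoint)
  qed
  have notin: "{s\<in>samples N n. j \<notin> s} = {s. s \<subseteq> A - {j} \<and> Suc (card s) = Suc n}"
    unfolding samples_def A_def by auto
  have inS: "(\<Sum>s\<in>{s\<in>samples N n. j \<in> s}. \<Prod>i\<in>s. q i) = q j * Fq q (A - {j}) n"
  proof -
    have "(\<Sum>s\<in>samples N n. \<Prod>i\<in>s. q i) = Fq q A (Suc n)"
      unfolding Fq_def samples_eq A_def ..
    moreover have "(\<Sum>s\<in>{s\<in>samples N n. j \<notin> s}. \<Prod>i\<in>s. q i) = Fq q (A - {j}) (Suc n)"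
      unfolding Fq_def notin ..
    moreover have "Fq q A (Suc n) = Fq q (A - {j}) (Suc n) + q j * Fq q (A - {j}) n"
      using Fq_remove[OF fin, of j q n] j unfolding A_def by simp
    ultimately show ?thesis using split by simp
  qed
  have "incl_prob N n p j = (\<Sum>s\<in>{s\<in>samples N n. j \<in> s}. rej_weight N p s / (\<Sum>t\<in>samples N n. rej_weight N p t))"
    unfolding incl_prob_def rej_prob_def by (intro sum.cong) auto
  also have "\<dots> = (\<Sum>s\<in>{s\<in>samples N n. j \<in> s}. C * (\<Prod>i\<in>s. q i)) / (C * Fq q A (Suc n))"
    unfolding Z sum_divide_distrib[symmetric]
    by (intro arg_cong2[where f="(/)"] sum.cong refl rw) (auto simp: samples_def A_def)
  also have "\<dots> = C * (q j * Fq q (A - {j}) n) / (C * Fq q A (Suc n))"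
    by (simp add: sum_distrib_left[symmetric] inS)
  also have "\<dots> = q j * Fq q (A - {j}) n / Fq q A (Suc n)"
    using Cpos by simp
  finally show ?thesis unfolding A_def .
qed



theorem mainTheorem7:
  fixes N n :: nat and p :: "nat \<Rightarrow> real"
    and G :: "('x \<Rightarrow> int) set" and X :: "nat \<Rightarrow> 'x" and Y :: "nat \<Rightarrow> int"
    and S :: "nat set"
  assumes "1 \<le> n" and "n \<le> N"
    and "\<forall>i\<in>{1..N}. 0 < p i \<and> p i < 1"
    and "(\<Sum>i=1..N. p i) = real n"
    and "d_N N p \<ge> 1"
    and "\<forall>i\<in>{1..N}. Y i \<in> {-1, 1}"
    and "S \<in> samples N n"
  shows "(\<forall>g\<in>G. \<bar>biased_HT_risk N S p g X Y - HT_risk N n p S g X Y\<bar>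
              \<le> (1 / real N) * (\<Sum>i=1..N. \<bar>1 / p i - 1 / incl_prob N n p i\<bar>))
       \<and> (1 / real N) * (\<Sum>i=1..N. \<bar>1 / p i - 1 / incl_prob N n p i\<bar>)
              \<le> 6 * real N * kappa_N N n p / (real n * d_N N p)"
proof
  show "\<forall>g\<in>G. \<bar>biased_HT_risk N S p g X Y - HT_risk N n p S g X Y\<bar>
              \<le> (1 / real N) * (\<Sum>i=1..N. \<bar>1 / p i - 1 / incl_prob N n p i\<bar>)"
  proof
    fix g assume "g \<in> G"
    define e where "e = (\<lambda>i. (if i \<in> S then 1 else 0::real) * (if g (X i) \<noteq> Y i then 1 else 0))"
    have e: "\<And>i. \<bar>e i\<bar> \<le> 1" unfolding e_def by auto
    have "biased_HT_risk N S p g X Y - HT_risk N n p S g X Y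
        = (1 / real N) * (\<Sum>i=1..N. e i * (1 / p i - 1 / incl_prob N n p i))"
    proof -
      have b: "biased_HT_risk N S p g X Y = (1 / real N) * (\<Sum>i=1..N. e i * (1 / p i))"
        proof -
        have "\<And>i. (if i \<in> S then 1 else 0) / p i * (if g (X i) \<noteq> Y i then 1 else 0) = e i * (1 / p i)"
          unfolding e_def by simp
        then show ?thesis unfolding biased_HT_risk_def ht_risk_def by presburger
      qed
      have h: "HT_risk N n p S g X Y = (1 / real N) * (\<Sum>i=1..N. e i * (1 / incl_prob N n p i))"
        proof -
        have "\<And>i. (if i \<in> S then 1 else 0) / incl_prob N n p i * (if g (X i) \<noteq> Y i then 1 else 0) = e i * (1 / incl_prob N n p i)"
          unfolding e_def by simp
        then show ?thesis unfolding HT_risk_def ht_risk_def by presburger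
      qed
      have "(\<Sum>i=1..N. e i * (1 / p i)) - (\<Sum>i=1..N. e i * (1 / incl_prob N n p i))
          = (\<Sum>i=1..N. e i * (1 / p i - 1 / incl_prob N n p i))"
        by (simp add: sum_subtractf[symmetric] right_diff_distrib)
      then show ?thesis unfolding b h right_diff_distrib[symmetric] by (simp only:)
    qed
    then have "\<bar>biased_HT_risk N S p g X Y - HT_risk N n p S g X Y\<bar>
        = (1 / real N) * \<bar>\<Sum>i=1..N. e i * (1 / p i - 1 / incl_prob N n p i)\<bar>"
      by (simp add: abs_mult)
    also have "\<dots> \<le> (1 / real N) * (\<Sum>i=1..N. \<bar>1 / p i - 1 / incl_prob N n p i\<bar>)"
    proof (rule mult_left_mono)
      have "\<bar>\<Sum>i=1..N. e i * (1 / p i - 1 / incl_prob N n p i)\<bar>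
          \<le> (\<Sum>i=1..N. \<bar>e i * (1 / p i - 1 / incl_prob N n p i)\<bar>)" by (rule sum_abs)
      also have "\<dots> \<le> (\<Sum>i=1..N. \<bar>1 / p i - 1 / incl_prob N n p i\<bar>)"
      proof (rule sum_mono)
        fix i
        have "\<bar>e i * (1 / p i - 1 / incl_prob N n p i)\<bar> = \<bar>e i\<bar> * \<bar>1 / p i - 1 / incl_prob N n p i\<bar>"
          by (rule abs_mult)
        also have "\<dots> \<le> 1 * \<bar>1 / p i - 1 / incl_prob N n p i\<bar>"
          using e by (intro mult_right_mono) auto
        finally show "\<bar>e i * (1 / p i - 1 / incl_prob N n p i)\<bar> \<le> \<bar>1 / p i - 1 / incl_prob N n p i\<bar>" by simp
      qed
      finally show "\<bar>\<Sum>i=1..N. e i * (1 / p i - 1 / incl_prob N n p i)\<bar>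
          \<le> (\<Sum>i=1..N. \<bar>1 / p i - 1 / incl_prob N n p i\<bar>)" .
    qed simp
    finally show "\<bar>biased_HT_risk N S p g X Y - HT_risk N n p S g X Y\<bar>
              \<le> (1 / real N) * (\<Sum>i=1..N. \<bar>1 / p i - 1 / incl_prob N n p i\<bar>)" .
  qed
next
  define A where "A = {1..N}"
  define q where "q = (\<lambda>i. p i / (1 - p i))"
  define d where "d = d_N N p"
  have fin: "finite A" unfolding A_def by simp
  have cardA: "card A = N" unfolding A_def by simp
  have Npos: "1 \<le> N" using assms(1,2) by simp
  have Ane: "A \<noteq> {}" unfolding A_def using Npos by auto
  have pA: "\<And>i. i \<in> A \<Longrightarrow> 0 < p i \<and> p i < 1" using assms(3) unfolding A_def by auto
  have qpos: "\<And>i. i \<in> A \<Longrightarrow> 0 < q i" unfolding q_def using pA by auto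
  have pq: "\<And>i. i \<in> A \<Longrightarrow> q i / (1 + q i) = p i"
  proof -
    fix i assume i: "i \<in> A"
    then have "p i < 1" using pA by auto
    then have "1 - p i \<noteq> 0" by simp
    then show "q i / (1 + q i) = p i" unfolding q_def by (simp add: field_simps)
  qed
  have "(\<Sum>i\<in>A. p i) < (\<Sum>i\<in>A. 1)"
    using pA by (intro sum_strict_mono[OF fin Ane]) auto
  then have "real n < real N" using assms(4) cardA unfolding A_def by simp
  then have nN: "n < N" by simp
  obtain m where m: "n = Suc m" using assms(1) by (cases n) auto
  have card: "m + 2 \<le> card A" using nN m cardA by simp
  have psum: "(\<Sum>j\<in>A. q j/(1+q j)) = real (Suc m)"
    using assms(4) pq m unfolding A_def by simp
  have dd: "(\<Sum>j\<in>A. q j/(1+q j) * (1 - q j/(1+q j))) = d"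
    unfolding d_def d_N_def A_def using pq unfolding A_def by (intro sum.cong) auto
  have d1: "1 \<le> d" using assms(5) unfolding d_def .
  have d1': "1 \<le> (\<Sum>j\<in>A. q j/(1+q j) * (1 - q j/(1+q j)))" unfolding dd by (rule d1)
  have C: "\<forall>j\<in>A. 0 < q j * Fq q (A-{j}) (Suc m) / Fq q A (Suc (Suc m)) \<and>
     \<bar>(q j * Fq q (A-{j}) (Suc m) / Fq q A (Suc (Suc m))) / (q j/(1+q j)) - 1\<bar>
       \<le> 6 / (\<Sum>j\<in>A. q j/(1+q j) * (1 - q j/(1+q j)))"
    by (rule core[OF fin _ card psum d1'], erule qpos)
  define pi where "pi = incl_prob N n p"
  have pieq: "\<And>j. j \<in> A \<Longrightarrow> pi j = q j * Fq q (A-{j}) (Suc m) / Fq q A (Suc (Suc m))"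
    unfolding pi_def q_def A_def m using incl_prob_eq assms(3) by (simp add: A_def)
  have pipos: "\<And>j. j \<in> A \<Longrightarrow> 0 < pi j" using C pieq by simp
  have pib: "\<And>j. j \<in> A \<Longrightarrow> \<bar>pi j / p j - 1\<bar> \<le> 6 / d" using C pieq pq dd by simp
  define pm where "pm = Min (pi ` A)"
  have pmA: "pm \<in> pi ` A" unfolding pm_def using fin Ane by (intro Min_in) auto
  have pmpos: "0 < pm" using pmA pipos by auto
  have pmle: "\<And>j. j \<in> A \<Longrightarrow> pm \<le> pi j" unfolding pm_def using fin by (intro Min_le) auto
  have dpos: "0 < d" using d1 by simp
  have tb: "\<And>j. j \<in> A \<Longrightarrow> \<bar>1 / p j - 1 / pi j\<bar> \<le> 6 / d / pm"
  proof -
    fix j assume j: "j \<in> A"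
    have pj: "0 < p j" using pA j by auto
    have "1 / p j - 1 / pi j = (pi j / p j - 1) / pi j" using pj pipos[OF j] by (simp add: field_simps)
    then have "\<bar>1 / p j - 1 / pi j\<bar> = \<bar>pi j / p j - 1\<bar> / pi j" using pipos[OF j] by simp
    also have "\<dots> \<le> (6 / d) / pi j" using pib[OF j] pipos[OF j] by (intro divide_right_mono) auto
    also have "\<dots> \<le> (6 / d) / pm" using pmle[OF j] pmpos dpos by (intro divide_left_mono) auto
    finally show "\<bar>1 / p j - 1 / pi j\<bar> \<le> 6 / d / pm" .
  qed
  have "(\<Sum>i=1..N. \<bar>1 / p i - 1 / pi i\<bar>) \<le> (\<Sum>i=1..N. 6 / d / pm)"
    using tb unfolding A_def by (intro sum_mono) auto
  also have "\<dots> = real N * (6 / d / pm)" by simp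
  finally have S: "(\<Sum>i=1..N. \<bar>1 / p i - 1 / pi i\<bar>) \<le> real N * (6 / d / pm)" .
  have Np: "0 < real N" using Npos by simp
  have "(1 / real N) * (\<Sum>i=1..N. \<bar>1 / p i - 1 / pi i\<bar>) \<le> (1 / real N) * (real N * (6 / d / pm))"
    using S Np by (intro mult_left_mono) auto
  also have "\<dots> = 6 / d / pm" using Np by simp
  also have "\<dots> = 6 * real N * kappa_N N n p / (real n * d_N N p)"
  proof -
    have "kappa_N N n p = (real n / real N) / pm"
      unfolding kappa_N_def pm_def pi_def A_def by simp
    moreover have "0 < real n" using assms(1) by simp
    ultimately show ?thesis using Np pmpos dpos unfolding d_def by (simp add: field_simps)
  qed
  finally show "(1 / real N) * (\<Sum>i=1..N. \<bar>1 / p i - 1 / incl_prob N n p i\<bar>)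
              \<le> 6 * real N * kappa_N N n p / (real n * d_N N p)" unfolding pi_def .
qed


end
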